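(* There is an absolute constant $C>0$ such that for every $N\in\mathbb{N}$, all functions $f_0,f_1\colon\mathbb{Z}\to\mathbb{C}$ with $|f_i|\le1$ supported in $[\pm2N^2]$, and every $f_2\colon\mathbb{Z}\to\mathbb{C}$ with $|f_2|\le1$ supported in $[N]$, \[ \Big|\mathbb{E}_{x\in[\pm2N^2],\,n\in[N]}f_0(x)f_1(x+n^2)f_2(n)\Big|\le CN^{-1/2}\|f_2\|_{U^3}. \]
   Context: $[N]=\{1,\dots,N\}$, $[\pm N]=[-N,N]\cap\mathbb{Z}$, $\mathbb{E}_{a\in A}$ is the average over the finite set $A$. For $f\colon\mathbb{Z}\to\mathbb{C}$ and $h\in\mathbb{Z}$, $\Delta_hf(x)=f(x)\overline{f(x+h)}$, $\Delta_{h_1,\dots,h_s}=\Delta_{h_1}\cdots\Delta_{h_s}$. For finitely supported $f$, the unnormalised Gowers norm is $\|f\|_{U^s}=\big(\sum_{x,h_1,\dots,h_s\in\mathbb{Z}}\Delta_{h_1,\dots,h_s}f(x)\big)^{1/2^s}$. *)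

theory Defs
  imports "HOL-Analysis.Analysis"
begin

definition mult_diff :: "int \<Rightarrow> (int \<Rightarrow> complex) \<Rightarrow> int \<Rightarrow> complex" where
  "mult_diff h f x = f x * cnj (f (x + h))"

fun mult_diffs :: "int list \<Rightarrow> (int \<Rightarrow> complex) \<Rightarrow> int \<Rightarrow> complex" where
  "mult_diffs [] f = f"
| "mult_diffs (h # hs) f = mult_diff h (mult_diffs hs f)"

text \<open>Unnormalised Gowers U^s norm of a finitely supported f :
  (sum over x, h_1..h_s in Z of Delta_{h_1..h_s} f(x))^(1/2^s).
  The sum has only finitely many nonzero terms for finitely supported f.\<close>
definition gowers_norm :: "nat \<Rightarrow> (int \<Rightarrow> complex) \<Rightarrow> real" where
  "gowers_norm s f =
     (Re (infsum (\<lambda>(x, hs). mult_diffs hs f x) {(x, hs). length hs = s}))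
       powr (1 / 2 ^ s)"

end

theory Submission
  imports Defs
begin


definition ee :: "nat \<Rightarrow> nat \<Rightarrow> int \<Rightarrow> complex" where
  "ee M \<xi> t = cis (2 * pi * real \<xi> / real M * of_int t)"

lemma ee_add: "ee M \<xi> (a + b) = ee M \<xi> a * ee M \<xi> b"
  by (simp add: ee_def cis_mult distrib_left)

lemma ee_diff: "ee M \<xi> (a - b) = ee M \<xi> a * ee M \<xi> (- b)"
  using ee_add[of M \<xi> a "-b"] by simp

lemma ee_cnj: "cnj (ee M \<xi> a) = ee M \<xi> (- a)"
  by (simp add: ee_def cis_cnj)

lemma ee_norm[simp]: "cmod (ee M \<xi> a) = 1"
  by (simp add: ee_def)

lemma orth:
  assumes M: "M > 0"
  shows "(\<Sum>\<xi><M. ee M \<xi> k) = (if int M dvd k then of_nat M else 0)"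
proof -
  define z where "z = cis (2 * pi * of_int k / real M)"
  have pw: "ee M \<xi> k = z ^ \<xi>" for \<xi>
    unfolding z_def Complex.DeMoivre ee_def by (simp add: field_simps)
  have zM: "z ^ M = 1"
  proof -
    have "z ^ M = cis (2 * pi * of_int k)" using M by (simp add: z_def Complex.DeMoivre)
    also have "\<dots> = 1" by (rule cis_multiple_2pi) simp
    finally show ?thesis .
  qed
  show ?thesis
  proof (cases "int M dvd k")
    case True
    then obtain m where m: "k = int M * m" by blast
    have "2 * pi * of_int k / real M = 2 * pi * of_int m" using M by (simp add: m)
    then have "z = 1" unfolding z_def by simp
    then show ?thesis using True by (simp add: pw)
  next
    case False
    have "z \<noteq> 1"
    proof
      assume "z = 1"
      then have "cos (2 * pi * of_int k / real M) = 1" by (simp add: z_def complex_eq_iff)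
      then obtain n :: int where n: "2 * pi * of_int k / real M = of_int n * 2 * pi"
        by (auto simp: cos_one_2pi_int)
      then have "real_of_int k = of_int n * real M" using M by (simp add: field_simps)
      then have "k = n * int M" by (metis of_int_eq_iff of_int_mult of_int_of_nat_eq)
      then show False using False by simp
    qed
    have "(\<Sum>\<xi><M. ee M \<xi> k) = (\<Sum>\<xi><M. z ^ \<xi>)" by (simp add: pw)
    also have "\<dots> = (z ^ M - 1) / (z - 1)" by (rule geometric_sum) fact
    also have "\<dots> = 0" by (simp add: zM)
    finally show ?thesis using False by simp
  qed
qed

lemma parseval:
  assumes M: "M > 0" and fin: "finite I"
    and sep: "\<And>x y. x \<in> I \<Longrightarrow> y \<in> I \<Longrightarrow> int M dvd (x - y) \<Longrightarrow> x = y"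
  shows "(\<Sum>\<xi><M. (cmod (\<Sum>x\<in>I. c x * ee M \<xi> x))\<^sup>2) = real M * (\<Sum>x\<in>I. (cmod (c x))\<^sup>2)"
proof -
  have "complex_of_real (\<Sum>\<xi><M. (cmod (\<Sum>x\<in>I. c x * ee M \<xi> x))\<^sup>2)
      = (\<Sum>\<xi><M. (\<Sum>x\<in>I. c x * ee M \<xi> x) * cnj (\<Sum>x\<in>I. c x * ee M \<xi> x))"
    by (simp only: of_real_sum complex_norm_square)
  also have "\<dots> = (\<Sum>\<xi><M. \<Sum>x\<in>I. \<Sum>y\<in>I. c x * cnj (c y) * ee M \<xi> (x - y))"
    apply (simp add: sum_distrib_left sum_distrib_right ee_cnj ee_add[symmetric] mult_ac)
    apply (rule sum.cong[OF refl])
    apply (subst sum.swap)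
    apply simp
    done
  also have "\<dots> = (\<Sum>x\<in>I. \<Sum>y\<in>I. c x * cnj (c y) * (\<Sum>\<xi><M. ee M \<xi> (x - y)))"
    by (simp add: sum_distrib_left sum.swap[of _ "{..<M}"])
  also have "\<dots> = (\<Sum>x\<in>I. \<Sum>y\<in>I. if y = x then c x * cnj (c y) * of_nat M else 0)"
    using sep by (intro sum.cong refl) (auto simp: orth[OF M])
  also have "\<dots> = (\<Sum>x\<in>I. of_nat M * (c x * cnj (c x)))"
    using fin by (simp add: mult_ac)
  also have "\<dots> = complex_of_real (real M * (\<Sum>x\<in>I. (cmod (c x))\<^sup>2))"
    by (simp add: sum_distrib_left flip: complex_norm_square)
  finally show ?thesis by (simp only: of_real_eq_iff)
qed

lemma fourier_id:
  fixes M :: nat and I X :: "int set" and f0 f1 f2 :: "int \<Rightarrow> complex"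
  assumes M: "M > 0" and finI: "finite I" and finX: "finite X"
    and sep: "\<And>x y n. x \<in> I \<Longrightarrow> y \<in> I \<Longrightarrow> n \<in> X \<Longrightarrow> int M dvd (x - y + n\<^sup>2) \<Longrightarrow> y = x + n\<^sup>2"
    and supp1: "\<And>y. y \<notin> I \<Longrightarrow> f1 y = 0"
  shows "of_nat M * (\<Sum>x\<in>I. \<Sum>n\<in>X. f0 x * f1 (x + n\<^sup>2) * f2 n)
    = (\<Sum>\<xi><M. (\<Sum>x\<in>I. f0 x * ee M \<xi> x) * (\<Sum>y\<in>I. f1 y * ee M \<xi> (- y))
          * (\<Sum>n\<in>X. f2 n * ee M \<xi> (n\<^sup>2)))"
proof -
  have "(\<Sum>\<xi><M. (\<Sum>x\<in>I. f0 x * ee M \<xi> x) * (\<Sum>y\<in>I. f1 y * ee M \<xi> (- y))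
          * (\<Sum>n\<in>X. f2 n * ee M \<xi> (n\<^sup>2)))
      = (\<Sum>\<xi><M. \<Sum>y\<in>I. \<Sum>x\<in>I. \<Sum>n\<in>X. f0 x * f1 y * f2 n * ee M \<xi> (x - y + n\<^sup>2))"
    by (simp add: sum_distrib_left sum_distrib_right ee_add ee_diff mult_ac)
  also have "\<dots> = (\<Sum>y\<in>I. \<Sum>x\<in>I. \<Sum>n\<in>X. f0 x * f1 y * f2 n * (\<Sum>\<xi><M. ee M \<xi> (x - y + n\<^sup>2)))"
    by (simp add: sum_distrib_left sum.swap[of _ "{..<M}"])
  also have "\<dots> = (\<Sum>y\<in>I. \<Sum>x\<in>I. \<Sum>n\<in>X. if y = x + n\<^sup>2 then f0 x * f1 y * f2 n * of_nat M else 0)"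
  proof (intro sum.cong refl)
    fix x y n assume xyn: "x \<in> I" "y \<in> I" "n \<in> X"
    have "(\<Sum>\<xi><M. ee M \<xi> (x - y + n\<^sup>2)) = (if y = x + n\<^sup>2 then of_nat M else 0)"
    proof (cases "y = x + n\<^sup>2")
      case True
      then show ?thesis by (simp add: orth[OF M])
    next
      case False
      with sep[OF xyn] have "\<not> int M dvd (x - y + n\<^sup>2)" by blast
      then show ?thesis using False by (simp add: orth[OF M])
    qed
    then show "f0 x * f1 y * f2 n * (\<Sum>\<xi><M. ee M \<xi> (x - y + n\<^sup>2))
      = (if y = x + n\<^sup>2 then f0 x * f1 y * f2 n * of_nat M else 0)"
      by simp
  qed
  also have "\<dots> = (\<Sum>x\<in>I. \<Sum>y\<in>I. \<Sum>n\<in>X. if y = x + n\<^sup>2 then f0 x * f1 y * f2 n * of_nat M else 0)"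
    by (rule sum.swap)
  also have "\<dots> = (\<Sum>x\<in>I. \<Sum>n\<in>X. \<Sum>y\<in>I. if y = x + n\<^sup>2 then f0 x * f1 y * f2 n * of_nat M else 0)"
    by (rule sum.cong[OF refl], rule sum.swap)
  also have "\<dots> = (\<Sum>x\<in>I. \<Sum>n\<in>X. f0 x * f1 (x + n\<^sup>2) * f2 n * of_nat M)"
  proof (intro sum.cong refl)
    fix x n
    have "(\<Sum>y\<in>I. if y = x + n\<^sup>2 then f0 x * f1 y * f2 n * of_nat M else 0)
       = (if x + n\<^sup>2 \<in> I then f0 x * f1 (x + n\<^sup>2) * f2 n * of_nat M else 0)"
      by (rule sum.delta[OF finI])
    also have "\<dots> = f0 x * f1 (x + n\<^sup>2) * f2 n * of_nat M"
      using supp1[of "x + n\<^sup>2"] by auto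
    finally show "(\<Sum>y\<in>I. if y = x + n\<^sup>2 then f0 x * f1 y * f2 n * of_nat M else 0)
       = f0 x * f1 (x + n\<^sup>2) * f2 n * of_nat M" .
  qed
  also have "\<dots> = of_nat M * (\<Sum>x\<in>I. \<Sum>n\<in>X. f0 x * f1 (x + n\<^sup>2) * f2 n)"
    by (simp add: sum_distrib_left mult_ac)
  finally show ?thesis by (rule sym)
qed



lemma mult_diff_zero: "G x = 0 \<Longrightarrow> mult_diff h G x = 0"
  by (simp add: mult_diff_def)

lemma sq_sum:
  fixes G :: "int \<Rightarrow> complex"
  assumes finX: "finite X" and finH: "finite H"
    and supp: "\<And>x. x \<notin> X \<Longrightarrow> G x = 0"
    and diff: "\<And>x y. x \<in> X \<Longrightarrow> y \<in> X \<Longrightarrow> y - x \<in> H"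
  shows "(\<Sum>h\<in>H. \<Sum>x\<in>X. mult_diff h G x) = of_real ((cmod (\<Sum>x\<in>X. G x))\<^sup>2)"
proof -
  have "(\<Sum>h\<in>H. \<Sum>x\<in>X. mult_diff h G x) = (\<Sum>x\<in>X. \<Sum>h\<in>H. G x * cnj (G (x + h)))"
    by (subst sum.swap) (simp add: mult_diff_def)
  also have "\<dots> = (\<Sum>x\<in>X. \<Sum>y\<in>X. G x * cnj (G y))"
  proof (rule sum.cong[OF refl])
    fix x assume x: "x \<in> X"
    have "(\<Sum>h\<in>H. G x * cnj (G (x + h))) = (\<Sum>y\<in>(+) x ` H. G x * cnj (G y))"
      by (subst sum.reindex) (auto simp: inj_on_def)
    also have "\<dots> = (\<Sum>y\<in>X. G x * cnj (G y))"
    proof (rule sum.mono_neutral_right)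
      show "finite ((+) x ` H)" using finH by simp
      show "X \<subseteq> (+) x ` H"
      proof
        fix y assume "y \<in> X"
        then have "y - x \<in> H" using diff x by blast
        then show "y \<in> (+) x ` H" by (rule rev_image_eqI) simp
      qed
      show "\<forall>i\<in>(+) x ` H - X. G x * cnj (G i) = 0" using supp by auto
    qed
    finally show "(\<Sum>h\<in>H. G x * cnj (G (x + h))) = (\<Sum>y\<in>X. G x * cnj (G y))" .
  qed
  also have "\<dots> = (\<Sum>x\<in>X. G x) * cnj (\<Sum>x\<in>X. G x)"
    by (simp add: sum_distrib_left sum_distrib_right cnj_sum) (rule sum.swap)
  also have "\<dots> = of_real ((cmod (\<Sum>x\<in>X. G x))\<^sup>2)"
    by (simp only: complex_norm_square)
  finally show ?thesis .
qed

lemma U3_eq: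
  fixes g :: "int \<Rightarrow> complex"
  assumes finX: "finite X" and finH: "finite H"
    and supp: "\<And>x. x \<notin> X \<Longrightarrow> g x = 0"
    and diff: "\<And>x y. x \<in> X \<Longrightarrow> y \<in> X \<Longrightarrow> y - x \<in> H"
  shows "(\<Sum>h3\<in>H. \<Sum>h2\<in>H. \<Sum>h1\<in>H. \<Sum>x\<in>X. mult_diffs [h1, h2, h3] g x)
    = of_real (\<Sum>h3\<in>H. \<Sum>h2\<in>H. (cmod (\<Sum>x\<in>X. mult_diff h2 (mult_diff h3 g) x))\<^sup>2)"
proof -
  have "(\<Sum>h3\<in>H. \<Sum>h2\<in>H. \<Sum>h1\<in>H. \<Sum>x\<in>X. mult_diffs [h1, h2, h3] g x)
     = (\<Sum>h3\<in>H. \<Sum>h2\<in>H. of_real ((cmod (\<Sum>x\<in>X. mult_diff h2 (mult_diff h3 g) x))\<^sup>2))"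
  proof (intro sum.cong refl)
    fix h3 h2
    show "(\<Sum>h1\<in>H. \<Sum>x\<in>X. mult_diffs [h1, h2, h3] g x)
       = of_real ((cmod (\<Sum>x\<in>X. mult_diff h2 (mult_diff h3 g) x))\<^sup>2)"
      using sq_sum[OF finX finH _ diff, of "mult_diff h2 (mult_diff h3 g)"]
      by (simp add: supp mult_diff_zero)
  qed
  then show ?thesis by simp
qed

lemma vdc3:
  fixes g :: "int \<Rightarrow> complex"
  assumes finX: "finite X" and finH: "finite H"
    and supp: "\<And>x. x \<notin> X \<Longrightarrow> g x = 0"
    and diff: "\<And>x y. x \<in> X \<Longrightarrow> y \<in> X \<Longrightarrow> y - x \<in> H"
  shows "(cmod (\<Sum>x\<in>X. g x)) ^ 8
    \<le> real (card H) ^ 4 * (\<Sum>h3\<in>H. \<Sum>h2\<in>H. (cmod (\<Sum>x\<in>X. mult_diff h2 (mult_diff h3 g) x))\<^sup>2)"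
proof -
  define K where "K = real (card H)"
  define u where "u h3 h2 = cmod (\<Sum>x\<in>X. mult_diff h2 (mult_diff h3 g) x)" for h3 h2
  define v where "v h3 = cmod (\<Sum>x\<in>X. mult_diff h3 g x)" for h3
  define s where "s = cmod (\<Sum>x\<in>X. g x)"
  have K0: "K \<ge> 0" by (simp add: K_def)
  have v0: "v h \<ge> 0" for h by (simp add: v_def)
  have u0: "u h h' \<ge> 0" for h h' by (simp add: u_def)
  have s0: "s \<ge> 0" by (simp add: s_def)
  have a: "(v h3)\<^sup>2 \<le> (\<Sum>h2\<in>H. u h3 h2)" for h3
  proof -
    have "of_real ((v h3)\<^sup>2) = (\<Sum>h2\<in>H. \<Sum>x\<in>X. mult_diff h2 (mult_diff h3 g) x)"
      unfolding v_def using sq_sum[OF finX finH _ diff, of "mult_diff h3 g"]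
      by (simp add: supp mult_diff_zero)
    then have "(v h3)\<^sup>2 = cmod (\<Sum>h2\<in>H. \<Sum>x\<in>X. mult_diff h2 (mult_diff h3 g) x)"
      by (metis norm_of_real abs_of_nonneg zero_le_power2)
    also have "\<dots> \<le> (\<Sum>h2\<in>H. u h3 h2)" unfolding u_def by (rule norm_sum)
    finally show ?thesis .
  qed
  have b: "s\<^sup>2 \<le> (\<Sum>h3\<in>H. v h3)"
  proof -
    have "of_real (s\<^sup>2) = (\<Sum>h3\<in>H. \<Sum>x\<in>X. mult_diff h3 g x)"
      unfolding s_def using sq_sum[OF finX finH supp diff] by simp
    then have "s\<^sup>2 = cmod (\<Sum>h3\<in>H. \<Sum>x\<in>X. mult_diff h3 g x)"
      by (metis norm_of_real abs_of_nonneg zero_le_power2)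
    also have "\<dots> \<le> (\<Sum>h3\<in>H. v h3)" unfolding v_def by (rule norm_sum)
    finally show ?thesis .
  qed
  have c: "(v h3) ^ 4 \<le> K * (\<Sum>h2\<in>H. (u h3 h2)\<^sup>2)" for h3
  proof -
    have "(v h3) ^ 4 = ((v h3)\<^sup>2)\<^sup>2" by simp
    also have "\<dots> \<le> (\<Sum>h2\<in>H. u h3 h2)\<^sup>2"
      using a[of h3] by (intro power_mono) auto
    also have "\<dots> \<le> (\<Sum>h2\<in>H. (u h3 h2)\<^sup>2) * K"
      unfolding K_def by (rule sum_squared_le_sum_of_squares)
    finally show ?thesis by (simp add: mult.commute)
  qed
  have d: "s ^ 4 \<le> K * (\<Sum>h3\<in>H. (v h3)\<^sup>2)"
  proof -
    have "s ^ 4 = (s\<^sup>2)\<^sup>2" by simp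
    also have "\<dots> \<le> (\<Sum>h3\<in>H. v h3)\<^sup>2"
      using b by (intro power_mono) auto
    also have "\<dots> \<le> (\<Sum>h3\<in>H. (v h3)\<^sup>2) * K"
      unfolding K_def by (rule sum_squared_le_sum_of_squares)
    finally show ?thesis by (simp add: mult.commute)
  qed
  have e: "(\<Sum>h3\<in>H. (v h3)\<^sup>2)\<^sup>2 \<le> (\<Sum>h3\<in>H. ((v h3)\<^sup>2)\<^sup>2) * K"
    unfolding K_def by (rule sum_squared_le_sum_of_squares)
  have "s ^ 8 = (s ^ 4)\<^sup>2" by simp
  also have "\<dots> \<le> (K * (\<Sum>h3\<in>H. (v h3)\<^sup>2))\<^sup>2"
    using d s0 by (intro power_mono) auto
  also have "\<dots> = K\<^sup>2 * (\<Sum>h3\<in>H. (v h3)\<^sup>2)\<^sup>2" by (simp add: power_mult_distrib)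
  also have "\<dots> \<le> K\<^sup>2 * ((\<Sum>h3\<in>H. ((v h3)\<^sup>2)\<^sup>2) * K)"
    using K0 e by (intro mult_left_mono) auto
  also have "\<dots> = K ^ 3 * (\<Sum>h3\<in>H. (v h3) ^ 4)" by (simp add: eval_nat_numeral mult_ac)
  also have "\<dots> \<le> K ^ 3 * (\<Sum>h3\<in>H. K * (\<Sum>h2\<in>H. (u h3 h2)\<^sup>2))"
    using K0 c by (intro mult_left_mono sum_mono) auto
  also have "\<dots> = K ^ 4 * (\<Sum>h3\<in>H. \<Sum>h2\<in>H. (u h3 h2)\<^sup>2)"
    by (simp add: eval_nat_numeral mult_ac flip: sum_distrib_left)
  finally show ?thesis by (simp add: s_def K_def u_def)
qed

lemma md3_zero:
  assumes "g x = 0 \<or> g (x + a) = 0 \<or> g (x + b) = 0 \<or> g (x + c) = 0"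
  shows "mult_diffs [a, b, c] g x = 0"
proof -
  have z2: "mult_diff h G y = 0" if "G (y + h) = 0" for h G y
    using that by (simp add: mult_diff_def)
  from assms show ?thesis
  proof (elim disjE)
    assume "g x = 0"
    then show ?thesis by (simp add: mult_diff_zero)
  next
    assume "g (x + a) = 0"
    then have "mult_diff b (mult_diff c g) (x + a) = 0" by (simp add: mult_diff_zero)
    then show ?thesis by (simp add: z2)
  next
    assume "g (x + b) = 0"
    then have "mult_diff c g (x + b) = 0" by (simp add: mult_diff_zero)
    then have "mult_diff b (mult_diff c g) x = 0" by (rule z2)
    then show ?thesis by (simp add: mult_diff_zero)
  next
    assume "g (x + c) = 0"
    then have "mult_diff c g x = 0" by (rule z2)
    then show ?thesis by (simp add: mult_diff_zero)
  qed
qed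

lemma gowers_sum:
  fixes g :: "int \<Rightarrow> complex"
  assumes finX: "finite X" and finH: "finite H"
    and supp: "\<And>x. x \<notin> X \<Longrightarrow> g x = 0"
    and diff: "\<And>x y. x \<in> X \<Longrightarrow> y \<in> X \<Longrightarrow> y - x \<in> H"
  shows "infsum (\<lambda>(x, hs). mult_diffs hs g x) {(x, hs). length hs = 3}
    = (\<Sum>h3\<in>H. \<Sum>h2\<in>H. \<Sum>h1\<in>H. \<Sum>x\<in>X. mult_diffs [h1, h2, h3] g x)"
proof -
  define \<phi> where "\<phi> = (\<lambda>(h3::int, h2::int, h1::int, x::int). (x, [h1, h2, h3]))"
  define D where "D = H \<times> H \<times> H \<times> X"
  define F where "F = (\<lambda>(x, hs). mult_diffs hs g x)"
  have finD: "finite D" using finX finH by (simp add: D_def)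
  have sub: "\<phi> ` D \<subseteq> {(x, hs). length hs = 3}" by (auto simp: \<phi>_def)
  have out: "F p = 0" if p: "p \<in> {(x, hs). length hs = 3} - \<phi> ` D" for p
  proof -
    obtain x hs where pe: "p = (x, hs)" by (cases p)
    with p have "length hs = 3" by simp
    then obtain a b c where hs: "hs = [a, b, c]"
      by (auto simp: numeral_3_eq_3 length_Suc_conv)
    have notin: "(c, b, a, x) \<notin> D"
    proof
      assume "(c, b, a, x) \<in> D"
      then have "\<phi> (c, b, a, x) \<in> \<phi> ` D" by blast
      then show False using p by (simp add: pe hs \<phi>_def)
    qed
    have "g x = 0 \<or> g (x + a) = 0 \<or> g (x + b) = 0 \<or> g (x + c) = 0"
    proof (rule ccontr)
      assume "\<not> ?thesis"
      then have "x \<in> X" "x + a \<in> X" "x + b \<in> X" "x + c \<in> X" using supp by auto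
      then have "a \<in> H" "b \<in> H" "c \<in> H" using diff by (metis add_diff_cancel_left')+
      then show False using notin \<open>x \<in> X\<close> by (simp add: D_def)
    qed
    then show ?thesis using md3_zero by (simp add: F_def pe hs)
  qed
  have "infsum F {(x, hs). length hs = 3} = infsum F (\<phi> ` D)"
    by (rule infsum_cong_neutral) (use sub out in auto)
  also have "\<dots> = sum F (\<phi> ` D)" using finD by simp
  also have "\<dots> = sum (F \<circ> \<phi>) D"
    by (rule sum.reindex) (auto simp: inj_on_def \<phi>_def)
  also have "\<dots> = (\<Sum>h3\<in>H. \<Sum>h2\<in>H. \<Sum>h1\<in>H. \<Sum>x\<in>X. mult_diffs [h1, h2, h3] g x)"
    apply (simp add: D_def F_def \<phi>_def sum.cartesian_product)
    apply (rule sum.cong[OF refl])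
    apply (auto split: prod.splits)
    done
  finally show ?thesis by (simp add: F_def)
qed

lemma powr8: "(R::real) \<ge> 0 \<Longrightarrow> (R powr (1/8)) ^ 8 = R"
  by (cases "R = 0") (simp_all add: powr_realpow[symmetric] powr_powr)

lemma sum_le_gowers:
  fixes g :: "int \<Rightarrow> complex"
  assumes finX: "finite X" and finH: "finite H"
    and supp: "\<And>x. x \<notin> X \<Longrightarrow> g x = 0"
    and diff: "\<And>x y. x \<in> X \<Longrightarrow> y \<in> X \<Longrightarrow> y - x \<in> H"
  shows "cmod (\<Sum>x\<in>X. g x) \<le> sqrt (real (card H)) * gowers_norm 3 g"
proof -
  define R where "R = (\<Sum>h3\<in>H. \<Sum>h2\<in>H. (cmod (\<Sum>x\<in>X. mult_diff h2 (mult_diff h3 g) x))\<^sup>2)"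
  have R0: "R \<ge> 0" by (simp add: R_def sum_nonneg)
  have gn: "gowers_norm 3 g = R powr (1/8)"
    using gowers_sum[OF assms] U3_eq[OF assms] by (simp add: gowers_norm_def R_def)
  have s8: "(cmod (\<Sum>x\<in>X. g x)) ^ 8 \<le> real (card H) ^ 4 * R"
    unfolding R_def by (rule vdc3[OF assms])
  have "(sqrt (real (card H)) * R powr (1/8)) ^ 8 = real (card H) ^ 4 * R"
  proof -
    have "(sqrt (real (card H))) ^ 8 = ((sqrt (real (card H)))\<^sup>2) ^ 4"
      by (simp only: power_mult[symmetric]) simp
    also have "\<dots> = real (card H) ^ 4" by simp
    finally show ?thesis using powr8[OF R0] by (simp add: power_mult_distrib)
  qed
  with s8 have "(cmod (\<Sum>x\<in>X. g x)) ^ 8 \<le> (sqrt (real (card H)) * R powr (1/8)) ^ 8" by simp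
  then have "cmod (\<Sum>x\<in>X. g x) \<le> sqrt (real (card H)) * R powr (1/8)"
    by (subst (asm) power_mono_iff) auto
  then show ?thesis by (simp add: gn)
qed



lemma md_mult: "mult_diffs hs (\<lambda>x. f x * p x) = (\<lambda>x. mult_diffs hs f x * mult_diffs hs p x)"
  by (induction hs) (auto simp: mult_diff_def fun_eq_iff mult_ac)

lemma phase3: "mult_diffs [a, b, c] (\<lambda>n. cis (t * of_int (n\<^sup>2))) x = 1"
  by (simp add: mult_diff_def cis_cnj cis_mult algebra_simps power2_eq_square)

lemma gowers_phase:
  "gowers_norm 3 (\<lambda>n. f n * cis (t * of_int (n\<^sup>2))) = gowers_norm 3 f"
proof -
  have "infsum (\<lambda>(x, hs). mult_diffs hs (\<lambda>n. f n * cis (t * of_int (n\<^sup>2))) x) {(x, hs). length hs = 3}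
      = infsum (\<lambda>(x, hs). mult_diffs hs f x) {(x, hs). length hs = 3}"
  proof (rule infsum_cong)
    fix p :: "int \<times> int list" assume "p \<in> {(x, hs). length hs = (3::nat)}"
    then obtain x a b c where p: "p = (x, [a, b, c])"
      by (cases p) (auto simp: numeral_3_eq_3 length_Suc_conv)
    show "(case p of (x, hs) \<Rightarrow> mult_diffs hs (\<lambda>n. f n * cis (t * of_int (n\<^sup>2))) x)
        = (case p of (x, hs) \<Rightarrow> mult_diffs hs f x)"
      unfolding p md_mult by (simp only: prod.case phase3 mult_1_right)
  qed
  then show ?thesis by (simp add: gowers_norm_def)
qed

lemma main_bound:
  fixes N :: nat and f0 f1 f2 :: "int \<Rightarrow> complex"
  assumes N: "N \<ge> 1"
    and b0: "\<And>x. cmod (f0 x) \<le> 1" and b1: "\<And>x. cmod (f1 x) \<le> 1"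
    and s0: "\<And>x. x \<notin> {- 2 * int N ^ 2 .. 2 * int N ^ 2} \<Longrightarrow> f0 x = 0"
    and s1: "\<And>x. x \<notin> {- 2 * int N ^ 2 .. 2 * int N ^ 2} \<Longrightarrow> f1 x = 0"
    and s2: "\<And>x. x \<notin> {1 .. int N} \<Longrightarrow> f2 x = 0"
  shows "cmod (\<Sum>x \<in> {- 2 * int N ^ 2 .. 2 * int N ^ 2}. \<Sum>n \<in> {1 .. int N}.
                 f0 x * f1 (x + n ^ 2) * f2 n)
     \<le> sqrt (real (2 * N + 1)) * gowers_norm 3 f2 * real (card {- 2 * int N ^ 2 .. 2 * int N ^ 2})"
proof -
  define I where "I = {- 2 * int N ^ 2 .. 2 * int N ^ 2}"
  define X where "X = {1 .. int N}"
  define H where "H = {- int N .. int N}"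
  define M where "M = 5 * N ^ 2 + 1"
  define S where "S = (\<Sum>x\<in>I. \<Sum>n\<in>X. f0 x * f1 (x + n ^ 2) * f2 n)"
  define G where "G = gowers_norm 3 f2"
  define Qm where "Qm = sqrt (real (2 * N + 1)) * G"
  define A where "A \<xi> = (\<Sum>x\<in>I. f0 x * ee M \<xi> x)" for \<xi>
  define B where "B \<xi> = (\<Sum>y\<in>I. f1 y * ee M \<xi> (- y))" for \<xi>
  define Q where "Q \<xi> = (\<Sum>n\<in>X. f2 n * ee M \<xi> (n\<^sup>2))" for \<xi>
  have M0: "M > 0" by (simp add: M_def)
  have MN: "int M = 5 * int N ^ 2 + 1" by (simp add: M_def)
  have finI: "finite I" and finX: "finite X" and finH: "finite H" by (simp_all add: I_def X_def H_def)
  have cardH: "card H = 2 * N + 1" unfolding H_def by simp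
  have nsq: "n\<^sup>2 \<le> int N ^ 2" "n\<^sup>2 \<ge> 0" if "n \<in> X" for n
    using that by (auto simp: X_def intro!: power_mono)
  have small: "k = 0" if "int M dvd k" "\<bar>k\<bar> < int M" for k
    using that dvd_imp_le_int[of k "int M"] by fastforce
  have sep: "y = x + n\<^sup>2" if "x \<in> I" "y \<in> I" "n \<in> X" "int M dvd (x - y + n\<^sup>2)" for x y n
  proof -
    have "x \<in> {- 2 * int N ^ 2 .. 2 * int N ^ 2}" "y \<in> {- 2 * int N ^ 2 .. 2 * int N ^ 2}"
      using that(1,2) by (simp_all add: I_def)
    moreover have "n\<^sup>2 \<le> int N ^ 2" "n\<^sup>2 \<ge> 0" using nsq[OF that(3)] by simp_all
    ultimately have "\<bar>x - y + n\<^sup>2\<bar> < int M" unfolding MN atLeastAtMost_iff by arith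
    then have "x - y + n\<^sup>2 = 0" using small that(4) by blast
    then show ?thesis by simp
  qed
  have fid: "of_nat M * S = (\<Sum>\<xi><M. A \<xi> * B \<xi> * Q \<xi>)"
    unfolding S_def A_def B_def Q_def
    by (rule fourier_id[OF M0 finI finX sep]) (use s1 in \<open>auto simp: I_def\<close>)
  have Qb: "cmod (Q \<xi>) \<le> Qm" for \<xi>
  proof -
    define t where "t = 2 * pi * real \<xi> / real M"
    have "Q \<xi> = (\<Sum>n\<in>X. f2 n * cis (t * of_int (n\<^sup>2)))"
      by (simp add: Q_def ee_def t_def)
    also have "cmod \<dots> \<le> sqrt (real (card H)) * gowers_norm 3 (\<lambda>n. f2 n * cis (t * of_int (n\<^sup>2)))"
      by (rule sum_le_gowers[OF finX finH]) (use s2 in \<open>auto simp: X_def H_def\<close>)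
    also have "\<dots> = Qm" by (simp only: gowers_phase) (simp add: cardH Qm_def G_def)
    finally show ?thesis .
  qed
  have G0: "G \<ge> 0" by (simp add: G_def gowers_norm_def)
  have Qm0: "Qm \<ge> 0" by (simp add: Qm_def G0)
  have sepI: "x = y" if "x \<in> I" "y \<in> I" "int M dvd (x - y)" for x y
  proof -
    have "\<bar>x - y\<bar> < int M" using that(1,2) by (auto simp: I_def MN)
    then show ?thesis using small that(3) by fastforce
  qed
  have PA: "(\<Sum>\<xi><M. (cmod (A \<xi>))\<^sup>2) \<le> real M * real (card I)"
  proof -
    have "(\<Sum>\<xi><M. (cmod (A \<xi>))\<^sup>2) = real M * (\<Sum>x\<in>I. (cmod (f0 x))\<^sup>2)"
      unfolding A_def by (rule parseval[OF M0 finI sepI])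
    also have "\<dots> \<le> real M * (\<Sum>x\<in>I. 1)"
      using b0 by (intro mult_left_mono sum_mono) (auto simp: power_le_one)
    finally show ?thesis by simp
  qed
  have PB: "(\<Sum>\<xi><M. (cmod (B \<xi>))\<^sup>2) \<le> real M * real (card I)"
  proof -
    have cB: "cmod (B \<xi>) = cmod (\<Sum>x\<in>I. cnj (f1 x) * ee M \<xi> x)" for \<xi>
    proof -
      have "cmod (B \<xi>) = cmod (cnj (B \<xi>))" by simp
      also have "cnj (B \<xi>) = (\<Sum>x\<in>I. cnj (f1 x) * ee M \<xi> x)"
        by (simp add: B_def cnj_sum ee_cnj)
      finally show ?thesis .
    qed
    have "(\<Sum>\<xi><M. (cmod (B \<xi>))\<^sup>2) = real M * (\<Sum>x\<in>I. (cmod (cnj (f1 x)))\<^sup>2)"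
      unfolding cB by (rule parseval[OF M0 finI sepI])
    also have "\<dots> \<le> real M * (\<Sum>x\<in>I. 1)"
      using b1 by (intro mult_left_mono sum_mono) (auto simp: power_le_one)
    finally show ?thesis by simp
  qed
  have "real M * cmod S = cmod (of_nat M * S)" by (simp add: norm_mult)
  also have "\<dots> \<le> (\<Sum>\<xi><M. cmod (A \<xi>) * cmod (B \<xi>) * cmod (Q \<xi>))"
    unfolding fid by (rule order_trans[OF norm_sum]) (simp add: norm_mult)
  also have "\<dots> \<le> (\<Sum>\<xi><M. ((cmod (A \<xi>))\<^sup>2 + (cmod (B \<xi>))\<^sup>2) / 2 * Qm)"
  proof (rule sum_mono)
    fix \<xi>
    have "cmod (A \<xi>) * cmod (B \<xi>) \<le> ((cmod (A \<xi>))\<^sup>2 + (cmod (B \<xi>))\<^sup>2) / 2"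
      using sum_squares_bound[of "cmod (A \<xi>)" "cmod (B \<xi>)"] by simp
    then show "cmod (A \<xi>) * cmod (B \<xi>) * cmod (Q \<xi>) \<le> ((cmod (A \<xi>))\<^sup>2 + (cmod (B \<xi>))\<^sup>2) / 2 * Qm"
      using Qb[of \<xi>] by (intro mult_mono) auto
  qed
  also have "\<dots> = (\<Sum>\<xi><M. (cmod (A \<xi>))\<^sup>2 + (cmod (B \<xi>))\<^sup>2) * (Qm / 2)"
    unfolding sum_distrib_right by (rule sum.cong) auto
  also have "\<dots> = ((\<Sum>\<xi><M. (cmod (A \<xi>))\<^sup>2) + (\<Sum>\<xi><M. (cmod (B \<xi>))\<^sup>2)) / 2 * Qm"
    by (simp add: sum.distrib)
  also have "\<dots> \<le> (real M * real (card I) + real M * real (card I)) / 2 * Qm"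
    using PA PB Qm0 by (intro mult_right_mono divide_right_mono add_mono) auto
  also have "\<dots> = real M * (Qm * real (card I))" by simp
  finally have "cmod S \<le> Qm * real (card I)" using M0 by simp
  then show ?thesis by (simp add: S_def I_def X_def Qm_def G_def)
qed



lemma aux: "(r::real) > 0 \<Longrightarrow> 2 * r * G / (r * r) = 2 * (1 / r) * G"
  by (simp add: field_simps)

theorem lemma3p5:
  shows "\<exists>C::real. C > 0 \<and>
    (\<forall>(N::nat) (f0::int \<Rightarrow> complex) (f1::int \<Rightarrow> complex) (f2::int \<Rightarrow> complex).
       N \<ge> 1 \<longrightarrow>
       (\<forall>x. cmod (f0 x) \<le> 1) \<longrightarrow> (\<forall>x. cmod (f1 x) \<le> 1) \<longrightarrow> (\<forall>x. cmod (f2 x) \<le> 1) \<longrightarrow>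
       (\<forall>x. x \<notin> {- 2 * int N ^ 2 .. 2 * int N ^ 2} \<longrightarrow> f0 x = 0) \<longrightarrow>
       (\<forall>x. x \<notin> {- 2 * int N ^ 2 .. 2 * int N ^ 2} \<longrightarrow> f1 x = 0) \<longrightarrow>
       (\<forall>x. x \<notin> {1 .. int N} \<longrightarrow> f2 x = 0) \<longrightarrow>
       cmod ((\<Sum>x \<in> {- 2 * int N ^ 2 .. 2 * int N ^ 2}. \<Sum>n \<in> {1 .. int N}.
                 f0 x * f1 (x + n ^ 2) * f2 n)
             / of_nat (card {- 2 * int N ^ 2 .. 2 * int N ^ 2} * card {1 .. int N}))
         \<le> C * real N powr (- 1 / 2) * gowers_norm 3 f2)"
proof (rule exI[of _ 2], intro conjI allI impI)
  show "(0::real) < 2" by simp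
next
  fix N :: nat and f0 f1 f2 :: "int \<Rightarrow> complex"
  assume N: "N \<ge> 1"
    and b0: "\<forall>x. cmod (f0 x) \<le> 1" and b1: "\<forall>x. cmod (f1 x) \<le> 1" and b2: "\<forall>x. cmod (f2 x) \<le> 1"
    and s0: "\<forall>x. x \<notin> {- 2 * int N ^ 2 .. 2 * int N ^ 2} \<longrightarrow> f0 x = 0"
    and s1: "\<forall>x. x \<notin> {- 2 * int N ^ 2 .. 2 * int N ^ 2} \<longrightarrow> f1 x = 0"
    and s2: "\<forall>x. x \<notin> {1 .. int N} \<longrightarrow> f2 x = 0"
  define S where "S = (\<Sum>x \<in> {- 2 * int N ^ 2 .. 2 * int N ^ 2}. \<Sum>n \<in> {1 .. int N}.
                 f0 x * f1 (x + n ^ 2) * f2 n)"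
  define cI where "cI = real (card {- 2 * int N ^ 2 .. 2 * int N ^ 2})"
  define G where "G = gowers_norm 3 f2"
  have G0: "G \<ge> 0" by (simp add: G_def gowers_norm_def)
  have "card {- 2 * int N ^ 2 .. 2 * int N ^ 2} > 0" by (subst card_gt_0_iff) (auto intro!: exI[of _ 0])
  then have cI0: "cI > 0" unfolding cI_def by (simp only: of_nat_0_less_iff)
  have N0: "real N > 0" using N by simp
  have mb: "cmod S \<le> sqrt (real (2 * N + 1)) * G * cI"
    unfolding S_def G_def cI_def by (rule main_bound[OF N]) (use b0 b1 s0 s1 s2 in blast)+
  have cX: "card {1 .. int N} = N" by simp
  have pw: "real N powr (- 1 / 2) = 1 / sqrt (real N)"
  proof -
    have "real N powr (- 1 / 2) = real N powr (- (1 / 2))" by simp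
    also have "\<dots> = inverse (real N powr (1 / 2))" by (rule powr_minus)
    also have "\<dots> = 1 / sqrt (real N)" using N0 by (simp only: powr_half_sqrt less_imp_le inverse_eq_divide)
    finally show ?thesis .
  qed
  have sq: "sqrt (real (2 * N + 1)) \<le> 2 * sqrt (real N)"
  proof -
    have "sqrt (real (2 * N + 1)) \<le> sqrt (4 * real N)" using N by simp
    also have "\<dots> = 2 * sqrt (real N)" by (simp add: real_sqrt_mult)
    finally show ?thesis .
  qed
  have "cmod (S / of_nat (card {- 2 * int N ^ 2 .. 2 * int N ^ 2} * card {1 .. int N}))
      = cmod S / (cI * real N)"
    by (simp only: norm_divide cX cI_def of_nat_mult[symmetric] norm_of_nat)
  also have "\<dots> \<le> sqrt (real (2 * N + 1)) * G * cI / (cI * real N)"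
    using mb cI0 N0 by (intro divide_right_mono) auto
  also have "\<dots> = sqrt (real (2 * N + 1)) * G / real N" using cI0 by simp
  also have "\<dots> \<le> 2 * sqrt (real N) * G / real N"
    using sq G0 N0 by (intro divide_right_mono mult_right_mono) auto
  also have "\<dots> = 2 * (1 / sqrt (real N)) * G"
  proof -
    have p: "sqrt (real N) > 0" using N0 by simp
    have "2 * sqrt (real N) * G / real N = 2 * sqrt (real N) * G / (sqrt (real N) * sqrt (real N))"
      using N0 by simp
    also have "\<dots> = 2 * (1 / sqrt (real N)) * G" using aux[OF p] .
    finally show ?thesis .
  qed
  also have "\<dots> = 2 * real N powr (- 1 / 2) * G" unfolding pw ..
  finally show "cmod (S / of_nat (card {- 2 * int N ^ 2 .. 2 * int N ^ 2} * card {1 .. int N}))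
      \<le> 2 * real N powr (- 1 / 2) * gowers_norm 3 f2" by (simp add: G_def)
qed


end
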